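(* Suppose that in a spherical tiling by angle congruent pentagons some angle value $\theta$ appears at every degree $3$ vertex. Then $\theta$ appears at least twice among the five angles of the pentagon.
   Context: A spherical tiling by angle congruent pentagons is a graph embedded in the sphere whose faces (tiles) are all pentagons, the tiling being edge-to-edge with every vertex of degree at least $3$; each corner of each tile carries a positive real angle, the angles at every vertex sum to $2\pi$, and all tiles have the same multiset of five corner angles (the "pentagon"). An angle value $\theta$ appears at a vertex if some corner at that vertex has angle $\theta$; it appears $k$ times in the pentagon if it has multiplicity $k$ in that multiset. *)

theory Defs
  imports Complex_Main "HOL-Library.Multiset"
begin

text \<open>Combinatorial model of a graph cellularly embedded in the sphere, as a
combinatorial map: a finite set of darts D, a fixed-point-free involution
alpha (the two darts of an edge), a permutation sigma (rotation of darts
around their common vertex).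
Corners of tiles correspond bijectively to darts: the corner d lies at vertex
(sigma-orbit of d) and in tile (face orbit of d).  The surface is the sphere
iff the map is connected and V - E + F = 2.\<close>

definition orb :: "('a \<Rightarrow> 'a) \<Rightarrow> 'a \<Rightarrow> 'a set" where
  "orb f x = range (\<lambda>n. (f ^^ n) x)"

definition vertices :: "'a set \<Rightarrow> ('a \<Rightarrow> 'a) \<Rightarrow> 'a set set" where
  "vertices D \<sigma> = orb \<sigma> ` D"

definition edges :: "'a set \<Rightarrow> ('a \<Rightarrow> 'a) \<Rightarrow> 'a set set" where
  "edges D \<alpha> = orb \<alpha> ` D"

definition faces :: "'a set \<Rightarrow> ('a \<Rightarrow> 'a) \<Rightarrow> ('a \<Rightarrow> 'a) \<Rightarrow> 'a set set" where
  "faces D \<alpha> \<sigma> = orb (\<sigma> \<circ> \<alpha>) ` D"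

definition spherical_map :: "'a set \<Rightarrow> ('a \<Rightarrow> 'a) \<Rightarrow> ('a \<Rightarrow> 'a) \<Rightarrow> bool" where
  "spherical_map D \<alpha> \<sigma> \<longleftrightarrow>
     finite D \<and> D \<noteq> {} \<and>
     bij_betw \<alpha> D D \<and> bij_betw \<sigma> D D \<and>
     (\<forall>d\<in>D. \<alpha> d \<noteq> d \<and> \<alpha> (\<alpha> d) = d) \<and>
     (\<forall>d\<in>D. \<forall>e\<in>D. (d, e) \<in> {(x, y). x \<in> D \<and> (y = \<alpha> x \<or> y = \<sigma> x)}\<^sup>*) \<and>
     int (card (vertices D \<sigma>)) - int (card (edges D \<alpha>)) + int (card (faces D \<alpha> \<sigma>)) = 2"

definition angle_congruent_pentagon_tiling ::
  "'a set \<Rightarrow> ('a \<Rightarrow> 'a) \<Rightarrow> ('a \<Rightarrow> 'a) \<Rightarrow> ('a \<Rightarrow> real) \<Rightarrow> real multiset \<Rightarrow> bool" where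
  "angle_congruent_pentagon_tiling D \<alpha> \<sigma> ang P \<longleftrightarrow>
     spherical_map D \<alpha> \<sigma> \<and>
     (\<forall>F\<in>faces D \<alpha> \<sigma>. card F = 5 \<and> inj_on (orb \<sigma>) F) \<and>
     (\<forall>v\<in>vertices D \<sigma>. card v \<ge> 3) \<and>
     (\<forall>d\<in>D. ang d > 0) \<and>
     (\<forall>v\<in>vertices D \<sigma>. (\<Sum>d\<in>v. ang d) = 2 * pi) \<and>
     (\<forall>F\<in>faces D \<alpha> \<sigma>. image_mset ang (mset_set F) = P)"

definition appears_at :: "('a \<Rightarrow> real) \<Rightarrow> real \<Rightarrow> 'a set \<Rightarrow> bool" where
  "appears_at ang \<theta> v \<longleftrightarrow> (\<exists>d\<in>v. ang d = \<theta>)"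

end

theory Submission
  imports Defs
begin

lemma funpow_in: "f ` D \<subseteq> D \<Longrightarrow> x \<in> D \<Longrightarrow> (f^^n) x \<in> D"
  by (induction n) auto

lemma orb_sub: "f ` D \<subseteq> D \<Longrightarrow> x \<in> D \<Longrightarrow> orb f x \<subseteq> D"
  unfolding orb_def using funpow_in[of f D x] by auto

lemma in_orb: "x \<in> orb f x"
  unfolding orb_def by (metis funpow_0 rangeI)

lemma periodic:
  assumes fin: "finite D" and bij: "bij_betw f D D" and x: "x \<in> D"
  shows "\<exists>p>0. (f^^p) x = x"
proof -
  have sub: "f ` D \<subseteq> D" using bij by (simp add: bij_betw_def)
  let ?h = "\<lambda>n. (f^^n) x"
  have "?h ` {..card D} \<subseteq> D" using funpow_in[OF sub x] by auto
  hence "\<not> inj_on ?h {..card D}"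
    using card_inj_on_le[OF _ _ fin, of ?h "{..card D}"] by force
  then obtain i j where ij: "i \<le> card D" "j \<le> card D" "i \<noteq> j" "?h i = ?h j"
    unfolding inj_on_def by auto
  then obtain a b where ab: "a < b" "?h a = ?h b"
    by (metis linorder_neqE_nat)
  have inj: "inj_on (f^^a) D" using bij_betw_funpow[OF bij] bij_betw_def by blast
  have "(f^^b) x = (f^^a) ((f^^(b-a)) x)"
    using ab(1) by (metis funpow_add le_add_diff_inverse less_imp_le o_apply)
  hence "(f^^a) ((f^^(b-a)) x) = (f^^a) x" using ab by simp
  hence "(f^^(b-a)) x = x" using inj funpow_in[OF sub x] x by (meson inj_on_def)
  thus ?thesis using ab(1) by (intro exI[of _ "b-a"]) auto
qed

lemma periodic_mult: "(f^^p) x = x \<Longrightarrow> (f^^(p*q)) x = x"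
proof (induction q)
  case 0 then show ?case by simp
next
  case (Suc q)
  have "(f^^(p*Suc q)) x = (f^^p) ((f^^(p*q)) x)"
    by (simp add: funpow_add)
  then show ?case using Suc by simp
qed

lemma orb_sym:
  assumes fin: "finite D" and bij: "bij_betw f D D" and x: "x \<in> D" and y: "y \<in> orb f x"
  shows "x \<in> orb f y"
proof -
  obtain k where k: "y = (f^^k) x" using y unfolding orb_def by auto
  obtain p where p: "p > 0" "(f^^p) x = x" using periodic[OF fin bij x] by blast
  have ge: "p*(k+1) \<ge> k" using p(1) by (simp add: trans_le_add2)
  have "(f^^(p*(k+1) - k)) y = (f^^(p*(k+1) - k + k)) x"
    by (simp add: k funpow_add)
  also have "\<dots> = x" using ge periodic_mult[OF p(2), of "k+1"] by simp
  finally show ?thesis unfolding orb_def by (metis rangeI)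
qed

lemma orb_sub_orb:
  assumes y: "y \<in> orb f x" shows "orb f y \<subseteq> orb f x"
proof
  fix z assume "z \<in> orb f y"
  then obtain n where "z = (f^^n) y" unfolding orb_def by auto
  moreover obtain k where "y = (f^^k) x" using y unfolding orb_def by auto
  ultimately have "z = (f^^(n+k)) x" by (simp add: funpow_add)
  thus "z \<in> orb f x" unfolding orb_def by auto
qed

lemma orb_eq:
  assumes fin: "finite D" and bij: "bij_betw f D D" and x: "x \<in> D" and y: "y \<in> orb f x"
  shows "orb f y = orb f x"
  using orb_sub_orb[OF y] orb_sub_orb[OF orb_sym[OF assms]] by blast

lemma orb_disj:
  assumes fin: "finite D" and bij: "bij_betw f D D" and x: "x \<in> D" and y: "y \<in> D"
    and z: "z \<in> orb f x" "z \<in> orb f y"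
  shows "orb f x = orb f y"
  using orb_eq[OF fin bij x z(1)] orb_eq[OF fin bij y z(2)] by simp

lemma orb_partition:
  assumes fin: "finite D" and bij: "bij_betw f D D"
  shows "\<Union>(orb f ` D) = D" "finite (orb f ` D)" "\<forall>A\<in>orb f ` D. finite A"
    "pairwise disjnt (orb f ` D)"
proof -
  have sub: "f ` D \<subseteq> D" using bij by (simp add: bij_betw_def)
  show "\<Union>(orb f ` D) = D"
  proof
    show "\<Union>(orb f ` D) \<subseteq> D"
    proof
      fix z assume "z \<in> \<Union>(orb f ` D)"
      then obtain x where "x \<in> D" "z \<in> orb f x" by auto
      thus "z \<in> D" using orb_sub[OF sub, of x] by auto
    qed
    show "D \<subseteq> \<Union>(orb f ` D)"
    proof
      fix z assume "z \<in> D"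
      thus "z \<in> \<Union>(orb f ` D)" using in_orb[of z f] by auto
    qed
  qed
  show "finite (orb f ` D)" using fin by simp
  show "\<forall>A\<in>orb f ` D. finite A"
  proof
    fix A assume "A \<in> orb f ` D"
    then obtain x where "x \<in> D" "A = orb f x" by auto
    thus "finite A" using orb_sub[OF sub, of x] fin finite_subset by auto
  qed
  show "pairwise disjnt (orb f ` D)" unfolding pairwise_def disjnt_def
  proof (intro ballI impI)
    fix A B assume AB: "A \<in> orb f ` D" "B \<in> orb f ` D" "A \<noteq> B"
    then obtain x y where xy: "x \<in> D" "y \<in> D" "A = orb f x" "B = orb f y" by auto
    show "A \<inter> B = {}"
    proof (rule ccontr)
      assume "A \<inter> B \<noteq> {}"
      then obtain z where "z \<in> orb f x" "z \<in> orb f y" using xy by auto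
      from orb_disj[OF fin bij xy(1,2) this] show False using xy AB(3) by simp
    qed
  qed
qed

lemma card_orbs:
  assumes fin: "finite D" and bij: "bij_betw f D D"
  shows "card D = (\<Sum>A\<in>orb f ` D. card A)"
proof -
  have "card (\<Union>(orb f ` D)) = (\<Sum>A\<in>orb f ` D. card A)"
    using orb_partition[OF assms] by (intro card_Union_disjoint) auto
  thus ?thesis using orb_partition(1)[OF assms] by simp
qed

lemma sum_orbs:
  assumes fin: "finite D" and bij: "bij_betw f D D"
  shows "(\<Sum>d\<in>D. g d) = (\<Sum>A\<in>orb f ` D. \<Sum>d\<in>A. g d)"
proof -
  have "(\<Sum>d\<in>\<Union>(orb f ` D). g d) = (\<Sum>A\<in>orb f ` D. \<Sum>d\<in>A. g d)"
    using sum.Union_disjoint[of "orb f ` D" g] orb_partition[OF assms]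
    unfolding pairwise_def disjnt_def by (simp add: o_def)
  thus ?thesis using orb_partition(1)[OF assms] by simp
qed

lemma orb_inv:
  assumes "\<alpha> (\<alpha> d) = d" shows "orb \<alpha> d = {d, \<alpha> d}"
proof -
  have "(\<alpha>^^n) d \<in> {d, \<alpha> d}" for n by (induction n) (use assms in auto)
  hence "orb \<alpha> d \<subseteq> {d, \<alpha> d}" unfolding orb_def by auto
  moreover have "\<alpha> d \<in> orb \<alpha> d" unfolding orb_def
    using rangeI[of "\<lambda>n. (\<alpha>^^n) d" 1] by simp
  ultimately show ?thesis using in_orb[of d \<alpha>] by auto
qed

lemma count_img: "finite F \<Longrightarrow> count (image_mset g (mset_set F)) t = card {d\<in>F. g d = t}"
  by (simp add: count_image_mset' eq_commute)

theorem lemma3: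
  fixes D :: "'a set" and \<alpha> \<sigma> :: "'a \<Rightarrow> 'a" and ang :: "'a \<Rightarrow> real"
    and P :: "real multiset" and \<theta> :: real
  assumes "angle_congruent_pentagon_tiling D \<alpha> \<sigma> ang P"
    and "\<forall>v\<in>vertices D \<sigma>. card v = 3 \<longrightarrow> appears_at ang \<theta> v"
  shows "count P \<theta> \<ge> 2"
proof (rule ccontr)
  assume cnt: "\<not> count P \<theta> \<ge> 2"
  note A = assms(1)[unfolded angle_congruent_pentagon_tiling_def spherical_map_def]
  have fin: "finite D" and ba: "bij_betw \<alpha> D D" and bs: "bij_betw \<sigma> D D" using A by auto
  have bf: "bij_betw (\<sigma> \<circ> \<alpha>) D D" using ba bs bij_betw_trans by blast
  define V where "V = vertices D \<sigma>"
  define E where "E = edges D \<alpha>"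
  define F where "F = faces D \<alpha> \<sigma>"
  have euler: "int (card V) - int (card E) + int (card F) = 2" using A V_def E_def F_def by simp
  have cF: "card D = 5 * card F"
    using card_orbs[OF fin bf] A unfolding F_def faces_def by simp
  have cE: "card D = 2 * card E"
  proof -
    have "\<forall>A\<in>E. card A = 2" unfolding E_def edges_def using A orb_inv
      by (metis (no_types, lifting) card_2_iff imageE)
    hence "(\<Sum>A\<in>E. card A) = (\<Sum>A\<in>E. 2)" by (intro sum.cong) auto
    thus ?thesis using card_orbs[OF fin ba] unfolding E_def edges_def by simp
  qed
  define V3 where "V3 = {v\<in>V. card v = 3}"
  have finV: "finite V" unfolding V_def vertices_def using fin by simp
  have cV: "card D = (\<Sum>v\<in>V. card v)" using card_orbs[OF fin bs] unfolding V_def vertices_def .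
  also have "\<dots> = (\<Sum>v\<in>V3. card v) + (\<Sum>v\<in>V-V3. card v)"
    using finV V3_def by (metis (no_types, lifting) mem_Collect_eq subsetI sum.subset_diff add.commute)
  also have "(\<Sum>v\<in>V3. card v) = 3 * card V3" unfolding V3_def by simp
  finally have "card D \<ge> 3 * card V3 + 4 * card (V - V3)"
  proof -
    assume h: "card D = 3 * card V3 + (\<Sum>v\<in>V-V3. card v)"
    have "(\<Sum>v\<in>V-V3. card v) \<ge> (\<Sum>v\<in>V-V3. 4)"
      apply (rule sum_mono) using A unfolding V3_def V_def by fastforce
    thus ?thesis using h by simp
  qed
  moreover have "card (V - V3) = card V - card V3" "card V3 \<le> card V"
    using finV V3_def by (auto intro: card_Diff_subset card_mono)
  ultimately have ineq: "int (card V3) + card D \<ge> 4 * card V" by linarith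
  define T where "T = {d\<in>D. ang d = \<theta>}"
  have cT: "card T = card F * count P \<theta>"
  proof -
    have "card T = (\<Sum>d\<in>D. if ang d = \<theta> then 1 else 0)"
      unfolding T_def using fin by (simp add: sum.If_cases Int_def)
    also have "\<dots> = (\<Sum>A\<in>F. \<Sum>d\<in>A. if ang d = \<theta> then 1 else 0)"
      using sum_orbs[OF fin bf] unfolding F_def faces_def by blast
    also have "\<dots> = (\<Sum>A\<in>F. count P \<theta>)"
    proof (rule sum.cong)
      fix Af assume Af: "Af \<in> F"
      have finA: "finite Af" using A Af unfolding F_def by (metis card.infinite zero_neq_numeral)
      have "(\<Sum>d\<in>Af. if ang d = \<theta> then 1 else 0) = card {d\<in>Af. ang d = \<theta>}"
        using finA by (simp add: sum.If_cases Int_def)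
      also have "\<dots> = count P \<theta>" using count_img[OF finA, of ang \<theta>] A Af F_def by simp
      finally show "(\<Sum>d\<in>Af. if ang d = \<theta> then 1 else 0) = count P \<theta>" .
    qed simp
    finally show ?thesis by simp
  qed
  have "\<forall>v\<in>V3. \<exists>d. d \<in> v \<and> ang d = \<theta>"
    using assms(2) unfolding V3_def V_def appears_at_def by blast
  then obtain g where g: "\<forall>v\<in>V3. g v \<in> v \<and> ang (g v) = \<theta>" by metis
  have subV: "\<forall>v\<in>V. v \<subseteq> D"
  proof
    fix v assume "v \<in> V"
    then obtain x where x: "x \<in> D" "v = orb \<sigma> x" unfolding V_def vertices_def by auto
    have "\<sigma> ` D \<subseteq> D" using bs by (simp add: bij_betw_def)
    thus "v \<subseteq> D" using orb_sub[OF _ x(1)] x(2) by simp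
  qed
  have injg: "inj_on g V3"
  proof (rule inj_onI)
    fix v w assume vw: "v \<in> V3" "w \<in> V3" "g v = g w"
    then obtain x y where xy: "x \<in> D" "y \<in> D" "v = orb \<sigma> x" "w = orb \<sigma> y"
      unfolding V3_def V_def vertices_def by auto
    have "g v \<in> orb \<sigma> x" "g v \<in> orb \<sigma> y" using g vw xy by auto
    from orb_disj[OF fin bs xy(1,2) this] show "v = w" using xy by simp
  qed
  have subT: "g ` V3 \<subseteq> T" using g subV unfolding T_def V3_def by auto
  have finT: "finite T" using fin T_def by simp
  have "card V3 \<le> card T" using card_inj_on_le[OF injg subT finT] .
  moreover have "card T \<le> card F"
  proof -
    have "count P \<theta> = 0 \<or> count P \<theta> = 1" using cnt by linarith
    thus ?thesis using cT by auto
  qed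
  ultimately have c1: "int (card V3) \<le> int (card F)" by simp
  have c2: "int (card D) = 5 * int (card F)" "int (card D) = 2 * int (card E)"
    using cF cE by simp_all
  show False using euler c1 c2 ineq by linarith
qed

end
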